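(* Consider the atomic model under the Shapley scheme with one large player of stake $a$ and all other players of stake $1$. If a Nash equilibrium partition contains two pools $S_1,S_2$ each consisting only of players of stake $1$, then $\big||S_1|-|S_2|\big|\le 1$.
   Context: Atomic model with threshold $h$: one player has stake $a$ and all others stake $1$, where $h,a$ are integers with $2\le a\le h-1$. Pools partition the players; a pool $S$ has reward $\rho(S)=1$ if its total stake is at least $h$ (winning) and $0$ otherwise. Shapley scheme: player $i$ in pool $S$ receives $\phi_i(S)=\sum_{T\subseteq S\setminus\{i\}}\frac{|T|!(|S|-|T|-1)!}{|S|!}(\rho(T\cup\{i\})-\rho(T))$. A partition into winning pools is a Nash equilibrium if no player can strictly increase her payment by moving to another pool of the partition or opening a new pool alone. *)

theory Defs
  imports Complex_Main "HOL-Library.Disjoint_Sets"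
begin

definition total_stake :: "('p \<Rightarrow> nat) \<Rightarrow> 'p set \<Rightarrow> nat" where
  "total_stake w S = (\<Sum>i\<in>S. w i)"

definition rho :: "nat \<Rightarrow> ('p \<Rightarrow> nat) \<Rightarrow> 'p set \<Rightarrow> real" where
  "rho h w S = (if total_stake w S \<ge> h then 1 else 0)"

definition winning :: "nat \<Rightarrow> ('p \<Rightarrow> nat) \<Rightarrow> 'p set \<Rightarrow> bool" where
  "winning h w S \<longleftrightarrow> total_stake w S \<ge> h"

definition shapley :: "nat \<Rightarrow> ('p \<Rightarrow> nat) \<Rightarrow> 'p \<Rightarrow> 'p set \<Rightarrow> real" where
  "shapley h w i S =
     (\<Sum>T\<in>Pow (S - {i}).
        (fact (card T) * fact (card S - card T - 1) / fact (card S))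
        * (rho h w (T \<union> {i}) - rho h w T))"

definition nash_eq :: "nat \<Rightarrow> ('p \<Rightarrow> nat) \<Rightarrow> 'p set \<Rightarrow> 'p set set \<Rightarrow> bool" where
  "nash_eq h w N P \<longleftrightarrow>
     partition_on N P \<and> (\<forall>S\<in>P. winning h w S) \<and>
     (\<forall>S\<in>P. \<forall>i\<in>S.
        (\<forall>T\<in>P. T \<noteq> S \<longrightarrow> shapley h w i (T \<union> {i}) \<le> shapley h w i S) \<and>
        shapley h w i {i} \<le> shapley h w i S)"

end

theory Submission
  imports Defs
begin

lemma shapley_unit:
  fixes w :: "'p \<Rightarrow> nat"
  assumes fin: "finite S" and w1: "\<forall>j\<in>S. w j = 1" and iS: "i \<in> S"
    and h1: "1 \<le> h" and hn: "h \<le> card S"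
  shows "shapley h w i S = 1 / real (card S)"
proof -
  define n where "n = card S"
  have n0: "n > 0" using fin iS n_def card_gt_0_iff by blast
  have ts: "total_stake w T = card T" if "T \<subseteq> S" for T
  proof -
    have "total_stake w T = (\<Sum>j\<in>T. 1)" unfolding total_stake_def
      using that w1 by (intro sum.cong) auto
    then show ?thesis by simp
  qed
  define c :: real where "c = fact (h - 1) * fact (n - (h - 1) - 1) / fact n"
  have term_eq: "(fact (card T) * fact (card S - card T - 1) / fact (card S))
        * (rho h w (T \<union> {i}) - rho h w T) = (if card T = h - 1 then c else 0)"
    if "T \<in> Pow (S - {i})" for T
  proof -
    have TS: "T \<subseteq> S" "i \<notin> T" using that by auto
    have fT: "finite T" using TS fin finite_subset by blast
    have "card (T \<union> {i}) = card T + 1" using TS fT by simp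
    moreover have "T \<union> {i} \<subseteq> S" using TS iS by auto
    ultimately have "rho h w (T \<union> {i}) - rho h w T = (if card T = h - 1 then 1 else 0)"
      unfolding rho_def using ts[of T] ts[of "T \<union> {i}"] TS h1 by auto
    then show ?thesis unfolding c_def n_def by auto
  qed
  have "shapley h w i S = (\<Sum>T\<in>Pow (S - {i}). if card T = h - 1 then c else 0)"
    unfolding shapley_def using term_eq by (intro sum.cong) auto
  also have "\<dots> = (\<Sum>T\<in>{T\<in>Pow (S - {i}). card T = h - 1}. c)"
    using sum.inter_filter[of "Pow (S - {i})" "\<lambda>_. c" "\<lambda>T. card T = h - 1"] fin by simp
  also have "\<dots> = real (card {T\<in>Pow (S - {i}). card T = h - 1}) * c" by simp
  also have "card {T\<in>Pow (S - {i}). card T = h - 1} = (n - 1) choose (h - 1)"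
  proof -
    have "{T\<in>Pow (S - {i}). card T = h - 1} = {B. B \<subseteq> S - {i} \<and> card B = h - 1}" by auto
    then show ?thesis using n_subsets[of "S - {i}" "h - 1"] fin iS n_def by simp
  qed
  also have "real ((n - 1) choose (h - 1)) * c = fact (n - 1) / fact n"
  proof -
    have le: "h - 1 \<le> n - 1" using hn n_def h1 by simp
    have e: "n - (h - 1) - 1 = (n - 1) - (h - 1)" by simp
    have "fact (h - 1) * fact ((n - 1) - (h - 1)) * ((n - 1) choose (h - 1)) = (fact (n - 1) :: nat)"
      using binomial_fact_lemma[OF le] .
    then have "(fact (h - 1) * fact ((n - 1) - (h - 1)) * real ((n - 1) choose (h - 1)) :: real) = fact (n - 1)"
      by (metis (mono_tags, lifting) of_nat_fact of_nat_mult)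
    then show ?thesis unfolding c_def e by (simp add: field_simps)
  qed
  also have "fact (n - 1) / fact n = (1 / real n :: real)"
    using fact_reduce[OF n0, where 'a=real] n0 by (simp add: field_simps)
  finally show ?thesis unfolding n_def .
qed

lemma one_dir:
  fixes h a :: nat and w :: "'p \<Rightarrow> nat" and N :: "'p set"
    and P :: "'p set set" and S1 S2 :: "'p set"
  assumes "2 \<le> a" and "a \<le> h - 1"
    and "finite N"
    and ne: "nash_eq h w N P"
    and "S1 \<in> P" and "S2 \<in> P" and "S1 \<noteq> S2"
    and "\<forall>i\<in>S1. w i = 1" and "\<forall>i\<in>S2. w i = 1"
  shows "card S1 \<le> card S2 + 1"
proof -
  have part: "partition_on N P" and win: "\<forall>S\<in>P. winning h w S"
   and nash: "\<forall>S\<in>P. \<forall>i\<in>S. (\<forall>T\<in>P. T \<noteq> S \<longrightarrow> shapley h w i (T \<union> {i}) \<le> shapley h w i S)"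
    using ne unfolding nash_eq_def by auto
  have sub1: "S1 \<subseteq> N" "S2 \<subseteq> N" using part assms(5,6) unfolding partition_on_def by auto
  have f1: "finite S1" "finite S2" using sub1 assms(3) finite_subset by auto
  have disj: "S1 \<inter> S2 = {}" using part assms(5,6,7) unfolding partition_on_def disjoint_def by auto
  have ts: "total_stake w S = card S" if "\<forall>j\<in>S. w j = 1" for S
    unfolding total_stake_def using that by (simp add: sum.cong[of S S w "\<lambda>_. 1"])
  have c1: "h \<le> card S1" using win assms(5) ts[OF assms(8)] unfolding winning_def by auto
  have c2: "h \<le> card S2" using win assms(6) ts[OF assms(9)] unfolding winning_def by auto
  have h3: "h \<ge> 3" using assms(1,2) by simp
  then obtain i where i: "i \<in> S1" using c1 by (metis card.empty ex_in_conv not_less_eq_eq numeral_3_eq_3 le0 le_zero_eq zero_neq_numeral)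
  have iS2: "i \<notin> S2" using disj i by auto
  have "shapley h w i (S2 \<union> {i}) \<le> shapley h w i S1"
    using nash assms(5,6,7) i by (metis Un_commute)
  moreover have "shapley h w i S1 = 1 / real (card S1)"
    using shapley_unit[OF f1(1) assms(8) i] h3 c1 by simp
  moreover have "card (S2 \<union> {i}) = card S2 + 1" using iS2 f1 by simp
  moreover have "shapley h w i (S2 \<union> {i}) = 1 / real (card (S2 \<union> {i}))"
    using shapley_unit[of "S2 \<union> {i}" w i h] f1 assms(8,9) i h3 c2 calculation(3) by auto
  ultimately have "1 / real (card S2 + 1) \<le> 1 / real (card S1)" by simp
  moreover have "card S1 > 0" using c1 h3 by simp
  ultimately show ?thesis by (simp add: divide_simps)
qed

theorem lemma3p8:
  fixes h a :: nat and w :: "'p \<Rightarrow> nat" and N :: "'p set" and b :: 'p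
    and P :: "'p set set" and S1 S2 :: "'p set"
  assumes "2 \<le> a" and "a \<le> h - 1"
    and "finite N" and "b \<in> N" and "w b = a"
    and "\<forall>i\<in>N. i \<noteq> b \<longrightarrow> w i = 1"
    and "nash_eq h w N P"
    and "S1 \<in> P" and "S2 \<in> P" and "S1 \<noteq> S2"
    and "\<forall>i\<in>S1. w i = 1" and "\<forall>i\<in>S2. w i = 1"
  shows "\<bar>int (card S1) - int (card S2)\<bar> \<le> 1"
proof -
  have "card S1 \<le> card S2 + 1"
    using one_dir[of a h N w P S1 S2] assms by blast
  moreover have "card S2 \<le> card S1 + 1"
    using one_dir[of a h N w P S2 S1] assms by metis
  ultimately show ?thesis by linarith
qed

end
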